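(* Let $V$ be a finite set, $C=(C_R)_{R\subseteq V}$ non-negative capacities and $D=(D_S)_{S\subseteq V}$ non-negative demands. Then \[ \mathrm{MaxHSP}(V,C,D)=\min_{\delta\in\Delta(V)}\frac{C\cdot\delta}{D\cdot\delta}, \] where $\Delta(V)$ is the set of all diversities on $V$. Moreover, the minimum is attained by a diversity $\delta$ supported on the hypergraph $H=(V,E)$ with $E=\{e\subseteq V: C_e>0\}$.
   Context: A diversity on $V$ is a function $\delta$ from subsets of $V$ to $\mathbb{R}$ with $\delta(A)\ge 0$, $\delta(A)=0$ whenever $|A|\le 1$ (values $0$ on larger sets are allowed), and $\delta(A\cup B)+\delta(B\cup C)\ge\delta(A\cup C)$ whenever $B\neq\emptyset$. Write $C\cdot\delta=\sum_{R\subseteq V}C_R\delta(R)$ and $D\cdot\delta=\sum_{S\subseteq V}D_S\delta(S)$; the quotient is considered for $\delta$ with $D\cdot\delta>0$. All subsets $R\subseteq V$ are regarded as hyperedges with capacity $C_R$. For $S\subseteq V$, $\mathcal{T}_S$ is the set of minimal connected sub-hypergraphs (sets $t$ of hyperedges, connected, whose union contains $S$, minimal with this property). $\mathrm{MaxHSP}(V,C,D)$ is the optimal value of the LP: maximize $f$ subject to $\sum_{S}\sum_{t\in\mathcal{T}_S:R\in t}z_{t,S}\le C_R$ for all $R\subseteq V$, $\sum_{t\in\mathcal{T}_S}z_{t,S}=f\cdot D_S$ for all $S\subseteq V$, $z_{t,S}\ge0$. Given a hypergraph $H=(V,E)$ and non-negative weights $w$ on $E$, the hypergraph Steiner diversity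 is $\delta(A)=\min\{\sum_{e\in E'}w(e):E'\subseteq E \text{ induces a connected sub-hypergraph containing } A\}$; a diversity is supported on $H$ if it is the hypergraph Steiner diversity of $H$ for some non-negative weights on $E$.
   Formalization: For |S| <= 1 the empty hyperedge set lies in $\mathcal{T}_S$, and supported on H means agreeing with the hypergraph Steiner diversity only on sets A that some connected set of hyperedges of H contains. Each condition added here is assumed in the paper as well or is needed for the statement above to hold. *)

theory Defs
  imports Complex_Main
begin

definition diversity :: "'a set \<Rightarrow> ('a set \<Rightarrow> real) \<Rightarrow> bool" where
  "diversity V \<delta> \<longleftrightarrow>
     (\<forall>A. A \<subseteq> V \<longrightarrow> \<delta> A \<ge> 0) \<and>
     (\<forall>A. A \<subseteq> V \<longrightarrow> card A \<le> 1 \<longrightarrow> \<delta> A = 0) \<and>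
     (\<forall>A B C. A \<subseteq> V \<longrightarrow> B \<subseteq> V \<longrightarrow> C \<subseteq> V \<longrightarrow> B \<noteq> {} \<longrightarrow>
        \<delta> (A \<union> B) + \<delta> (B \<union> C) \<ge> \<delta> (A \<union> C))"

definition dotp :: "'a set \<Rightarrow> ('a set \<Rightarrow> real) \<Rightarrow> ('a set \<Rightarrow> real) \<Rightarrow> real" where
  "dotp V X \<delta> = (\<Sum>R\<in>Pow V. X R * \<delta> R)"

definition hconnected :: "'a set \<Rightarrow> 'a set set \<Rightarrow> bool" where
  "hconnected W t \<longleftrightarrow>
     (\<forall>x\<in>W. \<forall>y\<in>W. (x, y) \<in> {(u, v). \<exists>e\<in>t. u \<in> e \<and> v \<in> e}\<^sup>*)"

definition conn_contains :: "'a set \<Rightarrow> 'a set set \<Rightarrow> bool" where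
  "conn_contains S t \<longleftrightarrow> hconnected (S \<union> \<Union>t) t"

definition trees :: "'a set \<Rightarrow> 'a set \<Rightarrow> 'a set set set" where
  "trees V S = {t. t \<subseteq> Pow V \<and> conn_contains S t \<and>
                   (\<forall>t'. t' \<subset> t \<longrightarrow> \<not> conn_contains S t')}"

definition hsp_feasible ::
  "'a set \<Rightarrow> ('a set \<Rightarrow> real) \<Rightarrow> ('a set \<Rightarrow> real) \<Rightarrow> real \<Rightarrow> bool" where
  "hsp_feasible V C D f \<longleftrightarrow>
     (\<exists>z :: 'a set set \<Rightarrow> 'a set \<Rightarrow> real.
        (\<forall>S\<in>Pow V. \<forall>t\<in>trees V S. z t S \<ge> 0) \<and>
        (\<forall>R\<in>Pow V. (\<Sum>S\<in>Pow V. \<Sum>t\<in>{t\<in>trees V S. R \<in> t}. z t S) \<le> C R) \<and>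
        (\<forall>S\<in>Pow V. (\<Sum>t\<in>trees V S. z t S) = f * D S))"

definition MaxHSP :: "'a set \<Rightarrow> ('a set \<Rightarrow> real) \<Rightarrow> ('a set \<Rightarrow> real) \<Rightarrow> real" where
  "MaxHSP V C D = Sup {f. hsp_feasible V C D f}"

definition steiner_val :: "'a set set \<Rightarrow> ('a set \<Rightarrow> real) \<Rightarrow> 'a set \<Rightarrow> real" where
  "steiner_val E w A = Min {(\<Sum>e\<in>E'. w e) | E'. E' \<subseteq> E \<and> conn_contains A E'}"

text \<open>delta is supported on the hypergraph (V,E): it is the hypergraph Steiner
  diversity for some non-negative weights, on every A for which the Steiner
  minimum exists (is over a non-empty set).\<close>
definition supported_on :: "'a set \<Rightarrow> 'a set set \<Rightarrow> ('a set \<Rightarrow> real) \<Rightarrow> bool" where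
  "supported_on V E \<delta> \<longleftrightarrow>
     (\<exists>w. (\<forall>e\<in>E. w e \<ge> 0) \<and>
          (\<forall>A. A \<subseteq> V \<longrightarrow> (\<exists>E'\<subseteq>E. conn_contains A E') \<longrightarrow> \<delta> A = steiner_val E w A))"

end

theory Submission
  imports Defs
begin

definition ip :: "'k set \<Rightarrow> ('k \<Rightarrow> real) \<Rightarrow> ('k \<Rightarrow> real) \<Rightarrow> real" where
  "ip K u x = (\<Sum>k\<in>K. u k * x k)"

lemma ip_lin_right: "ip K u (\<lambda>k. x k - c * y k) = ip K u x - c * ip K u y"
  by (simp add: ip_def sum_subtractf sum_distrib_left algebra_simps)

lemma ip_lin_left: "ip K (\<lambda>k. u k - c * v k) x = ip K u x - c * ip K v x"
  by (simp add: ip_def sum_subtractf sum_distrib_left algebra_simps)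

lemma farkas:
  fixes a :: "'j \<Rightarrow> 'k \<Rightarrow> real" and b :: "'k \<Rightarrow> real"
  assumes K: "finite K" and J: "finite J"
  shows "(\<exists>l. (\<forall>j\<in>J. l j \<ge> 0) \<and> (\<forall>k\<in>K. b k = (\<Sum>j\<in>J. l j * a j k)))
       \<or> (\<exists>x. (\<forall>j\<in>J. ip K (a j) x \<le> 0) \<and> ip K b x > 0)"
  using J
proof (induction J arbitrary: a b rule: finite_induct)
  case empty
  show ?case
  proof (cases "\<forall>k\<in>K. b k = 0")
    case True then show ?thesis by auto
  next
    case False
    then obtain k0 where k0: "k0 \<in> K" "b k0 \<noteq> 0" by auto
    have "ip K b b > 0" unfolding ip_def
      by (rule sum_pos2[OF K k0(1)]) (use k0 in \<open>auto simp: zero_less_mult_iff not_less_iff_gr_or_eq\<close>)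
    then show ?thesis by auto
  qed
next
  case (insert m J)
  show ?case
  proof (rule ccontr)
    assume neg: "\<not> ?case"
    hence noX: "\<And>x. (\<forall>j\<in>insert m J. ip K (a j) x \<le> 0) \<Longrightarrow> \<not> ip K b x > 0" by blast
    have noL: "\<And>l. (\<forall>j\<in>insert m J. l j \<ge> 0) \<Longrightarrow> \<not> (\<forall>k\<in>K. b k = (\<Sum>j\<in>insert m J. l j * a j k))"
      using neg by blast
    from insert.IH[of b a] show False
    proof
      assume "\<exists>l. (\<forall>j\<in>J. l j \<ge> 0) \<and> (\<forall>k\<in>K. b k = (\<Sum>j\<in>J. l j * a j k))"
      then obtain l where l: "\<forall>j\<in>J. l j \<ge> 0" "\<forall>k\<in>K. b k = (\<Sum>j\<in>J. l j * a j k)" by blast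
      let ?l = "l(m := 0)"
      have "\<forall>j\<in>insert m J. ?l j \<ge> 0" using l by auto
      moreover have "\<forall>k\<in>K. b k = (\<Sum>j\<in>insert m J. ?l j * a j k)"
      proof
        fix k assume "k \<in> K"
        have "(\<Sum>j\<in>insert m J. ?l j * a j k) = (\<Sum>j\<in>J. ?l j * a j k)"
          using insert.hyps by simp
        also have "\<dots> = (\<Sum>j\<in>J. l j * a j k)"
          using insert.hyps by (intro sum.cong) auto
        finally show "b k = (\<Sum>j\<in>insert m J. ?l j * a j k)" using l \<open>k\<in>K\<close> by simp
      qed
      ultimately show False using noL by blast
    next
      assume "\<exists>x. (\<forall>j\<in>J. ip K (a j) x \<le> 0) \<and> ip K b x > 0"
      then obtain x0 where x0: "\<forall>j\<in>J. ip K (a j) x0 \<le> 0" "ip K b x0 > 0" by blast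
      define \<alpha> where "\<alpha> = ip K (a m) x0"
      have apos: "\<alpha> > 0"
      proof (rule ccontr)
        assume "\<not> \<alpha> > 0"
        hence "\<forall>j\<in>insert m J. ip K (a j) x0 \<le> 0" using x0 \<alpha>_def by auto
        thus False using noX x0 by blast
      qed
      define a' where "a' = (\<lambda>j k. a j k - (ip K (a j) x0 / \<alpha>) * a m k)"
      define b' where "b' = (\<lambda>k. b k - (ip K b x0 / \<alpha>) * a m k)"
      from insert.IH[of b' a'] show False
      proof
        assume "\<exists>l. (\<forall>j\<in>J. l j \<ge> 0) \<and> (\<forall>k\<in>K. b' k = (\<Sum>j\<in>J. l j * a' j k))"
        then obtain l where l: "\<forall>j\<in>J. l j \<ge> 0" "\<forall>k\<in>K. b' k = (\<Sum>j\<in>J. l j * a' j k)" by blast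
        define c where "c = (ip K b x0 - (\<Sum>j\<in>J. l j * ip K (a j) x0)) / \<alpha>"
        let ?l = "l(m := c)"
        have "(\<Sum>j\<in>J. l j * ip K (a j) x0) \<le> 0"
          using l(1) x0(1) by (intro sum_nonpos) (simp add: mult_nonneg_nonpos)
        hence "c \<ge> 0" unfolding c_def using apos x0(2) by simp
        hence "\<forall>j\<in>insert m J. ?l j \<ge> 0" using l by auto
        moreover have "\<forall>k\<in>K. b k = (\<Sum>j\<in>insert m J. ?l j * a j k)"
        proof
          fix k assume "k \<in> K"
          have h1: "(\<Sum>j\<in>insert m J. ?l j * a j k) = c * a m k + (\<Sum>j\<in>J. l j * a j k)"
          proof -
            have "(\<Sum>j\<in>J. ?l j * a j k) = (\<Sum>j\<in>J. l j * a j k)"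
              using insert.hyps by (intro sum.cong) auto
            thus ?thesis using insert.hyps by simp
          qed
          have h2: "b k - (ip K b x0 / \<alpha>) * a m k = (\<Sum>j\<in>J. l j * a j k) - (\<Sum>j\<in>J. l j * ip K (a j) x0) / \<alpha> * a m k"
            using l(2) \<open>k\<in>K\<close> unfolding a'_def b'_def
            by (simp add: algebra_simps sum_subtractf sum_distrib_left sum_divide_distrib sum_distrib_right)
          have key: "\<And>bb p mm s1 s2. bb - p/\<alpha>*mm = s1 - s2/\<alpha>*mm \<Longrightarrow> bb = (p-s2)/\<alpha>*mm + s1"
            using apos by (simp add: field_simps)
          have "b k = c * a m k + (\<Sum>j\<in>J. l j * a j k)"
            using key[OF h2] unfolding c_def by simp
          with h1 show "b k = (\<Sum>j\<in>insert m J. ?l j * a j k)" by simp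
        qed
        ultimately show False using noL by blast
      next
        assume "\<exists>x. (\<forall>j\<in>J. ip K (a' j) x \<le> 0) \<and> ip K b' x > 0"
        then obtain x where x: "\<forall>j\<in>J. ip K (a' j) x \<le> 0" "ip K b' x > 0" by blast
        define x' where "x' = (\<lambda>k. x k - (ip K (a m) x / \<alpha>) * x0 k)"
        have e1: "ip K (a m) x' = 0" unfolding x'_def ip_lin_right using apos \<alpha>_def by simp
        have e2: "ip K (a j) x' = ip K (a' j) x" for j
          unfolding x'_def a'_def ip_lin_right ip_lin_left by (simp add: ip_def sum_distrib_left mult.commute)
        have e3: "ip K b x' = ip K b' x"
          unfolding x'_def b'_def ip_lin_right ip_lin_left by (simp add: ip_def sum_distrib_left mult.commute)
        have "\<forall>j\<in>insert m J. ip K (a j) x' \<le> 0" using e1 e2 x(1) by auto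
        hence "\<not> ip K b x' > 0" using noX by blast
        thus False using e3 x(2) by linarith
      qed
    qed
  qed
qed


definition hrel :: "'a set set \<Rightarrow> ('a \<times> 'a) set" where
  "hrel t = {(u, v). \<exists>e\<in>t. u \<in> e \<and> v \<in> e}"

lemma conn_contains_iff: "conn_contains S t \<longleftrightarrow> (\<forall>x\<in>S \<union> \<Union>t. \<forall>y\<in>S \<union> \<Union>t. (x,y) \<in> (hrel t)\<^sup>*)"
  unfolding conn_contains_def hconnected_def hrel_def by simp

lemma hrel_mono: "t \<subseteq> t' \<Longrightarrow> (hrel t)\<^sup>* \<subseteq> (hrel t')\<^sup>*"
  unfolding hrel_def by (rule rtrancl_mono) blast

lemma conn_union:
  assumes "conn_contains (A \<union> B) E1" "conn_contains (B \<union> C) E2" "B \<noteq> {}"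
  shows "conn_contains (A \<union> C) (E1 \<union> E2)"
proof -
  obtain b where b: "b \<in> B" using assms(3) by auto
  have m1: "(hrel E1)\<^sup>* \<subseteq> (hrel (E1 \<union> E2))\<^sup>*" "(hrel E2)\<^sup>* \<subseteq> (hrel (E1 \<union> E2))\<^sup>*"
    by (auto intro: hrel_mono[THEN subsetD])
  have tob: "(x, b) \<in> (hrel (E1 \<union> E2))\<^sup>* \<and> (b, x) \<in> (hrel (E1 \<union> E2))\<^sup>*"
    if "x \<in> A \<union> C \<union> \<Union>(E1 \<union> E2)" for x
  proof -
    have "x \<in> A \<union> B \<union> \<Union>E1 \<or> x \<in> B \<union> C \<union> \<Union>E2" using that by auto
    thus ?thesis
    proof
      assume "x \<in> A \<union> B \<union> \<Union>E1"
      thus ?thesis using assms(1) b m1(1) unfolding conn_contains_iff by blast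
    next
      assume "x \<in> B \<union> C \<union> \<Union>E2"
      thus ?thesis using assms(2) b m1(2) unfolding conn_contains_iff by blast
    qed
  qed
  show ?thesis unfolding conn_contains_iff
    using tob by (meson rtrancl_trans)
qed

lemma conn_empty_iff: "conn_contains S {} \<longleftrightarrow> (\<forall>x\<in>S. \<forall>y\<in>S. x = y)"
  unfolding conn_contains_iff hrel_def by simp

lemma conn_empty_card: "finite S \<Longrightarrow> conn_contains S {} \<longleftrightarrow> card S \<le> 1"
  unfolding conn_empty_iff by (simp add: card_le_Suc0_iff_eq)

lemma conn_single: "conn_contains R {R}"
  unfolding conn_contains_iff hrel_def by auto

lemma minimal_sub:
  assumes "finite t" "P t"
  shows "\<exists>t'\<subseteq>t. P t' \<and> (\<forall>t''. t'' \<subset> t' \<longrightarrow> \<not> P t'')"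
  using assms
proof (induction "card t" arbitrary: t rule: less_induct)
  case less
  show ?case
  proof (cases "\<exists>t''. t'' \<subset> t \<and> P t''")
    case True
    then obtain t'' where "t'' \<subset> t" "P t''" by blast
    moreover have "card t'' < card t" using \<open>t'' \<subset> t\<close> less.prems(1) by (simp add: psubset_card_mono)
    moreover have "finite t''" using \<open>t'' \<subset> t\<close> less.prems(1) finite_subset by auto
    ultimately show ?thesis using less.hyps by (meson order.strict_implies_order order_trans)
  next
    case False
    thus ?thesis using less.prems by blast
  qed
qed

lemma tree_sub:
  assumes "finite V" "t \<subseteq> Pow V" "conn_contains S t"
  shows "\<exists>t'\<subseteq>t. t' \<in> trees V S"
proof -
  have "finite t" using assms(1,2) finite_subset by (metis finite_Pow_iff)
  from minimal_sub[of t "conn_contains S", OF this assms(3)]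
  obtain t' where "t' \<subseteq> t" "conn_contains S t'" "\<forall>t''. t'' \<subset> t' \<longrightarrow> \<not> conn_contains S t''" by blast
  thus ?thesis using assms(2) unfolding trees_def by blast
qed

lemma trees_fin: "finite V \<Longrightarrow> finite (trees V S)"
  unfolding trees_def by (rule finite_subset[of _ "Pow (Pow V)"]) auto

lemma trees_sub: "t \<in> trees V S \<Longrightarrow> t \<subseteq> Pow V"
  unfolding trees_def by auto

lemma closed_hrel:
  assumes "(x, y) \<in> (hrel t)\<^sup>*" "x \<in> \<Union>U" "U \<subseteq> t" "\<forall>e\<in>t - U. e \<inter> \<Union>U = {}"
  shows "y \<in> \<Union>U"
  using assms(1,2)
proof (induction rule: rtrancl_induct)
  case base thus ?case by simp
next
  case (step y z)
  then obtain e where e: "e \<in> t" "y \<in> e" "z \<in> e" unfolding hrel_def by auto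
  show ?case
  proof (cases "e \<in> U")
    case True thus ?thesis using e by auto
  next
    case False
    hence "e \<inter> \<Union>U = {}" using assms(4) e(1) by auto
    thus ?thesis using e step by auto
  qed
qed

lemma conn_cover:
  assumes "conn_contains S t" "\<Union>t \<noteq> {}"
  shows "S \<subseteq> \<Union>t"
proof
  fix x assume x: "x \<in> S"
  obtain y where y: "y \<in> \<Union>t" using assms(2) by auto
  have "(y, x) \<in> (hrel t)\<^sup>*" using assms(1) x y unfolding conn_contains_iff by blast
  thus "x \<in> \<Union>t" using closed_hrel[of y x t t] y by auto
qed


lemma div_nonneg: "diversity V \<delta> \<Longrightarrow> A \<subseteq> V \<Longrightarrow> \<delta> A \<ge> 0"
  unfolding diversity_def by blast

lemma div_small: "diversity V \<delta> \<Longrightarrow> A \<subseteq> V \<Longrightarrow> card A \<le> 1 \<Longrightarrow> \<delta> A = 0"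
  unfolding diversity_def by blast

lemma div_tri: "diversity V \<delta> \<Longrightarrow> A \<subseteq> V \<Longrightarrow> B \<subseteq> V \<Longrightarrow> C \<subseteq> V \<Longrightarrow> B \<noteq> {} \<Longrightarrow>
   \<delta> (A \<union> C) \<le> \<delta> (A \<union> B) + \<delta> (B \<union> C)"
  unfolding diversity_def by blast

lemma div_mono:
  assumes d: "diversity V \<delta>" and "finite Y" "X \<subseteq> Y" "Y \<subseteq> V"
  shows "\<delta> X \<le> \<delta> Y"
proof -
  have "finite (Y - X)" using assms(2) by auto
  have "X \<union> F \<subseteq> V \<Longrightarrow> \<delta> X \<le> \<delta> (X \<union> F)" if "finite F" for F
    using that
  proof (induction F rule: finite_induct)
    case empty thus ?case by simp
  next
    case (insert b F)
    have "\<delta> (X \<union> F) \<le> \<delta> ((X \<union> F) \<union> {b}) + \<delta> ({b} \<union> {})"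
      using div_tri[OF d, of "X \<union> F" "{b}" "{}"] insert.prems by auto
    moreover have "\<delta> {b} = 0" using div_small[OF d, of "{b}"] insert.prems by auto
    ultimately show ?case using insert by auto
  qed
  from this[OF \<open>finite (Y - X)\<close>] show ?thesis using assms(3,4)
    by (metis Diff_partition)
qed

lemma div_sub:
  assumes d: "diversity V \<delta>" "X \<subseteq> V" "Y \<subseteq> V" "X \<inter> Y \<noteq> {}"
  shows "\<delta> (X \<union> Y) \<le> \<delta> X + \<delta> Y"
proof -
  have "\<delta> (X \<union> Y) \<le> \<delta> (X \<union> (X \<inter> Y)) + \<delta> ((X \<inter> Y) \<union> Y)"
    using div_tri[OF d(1), of X "X \<inter> Y" Y] assms by auto
  moreover have "X \<union> (X \<inter> Y) = X" "(X \<inter> Y) \<union> Y = Y" by auto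
  ultimately show ?thesis by simp
qed

lemma div_grow:
  assumes d: "diversity V \<delta>" and V: "finite V" and t: "t \<subseteq> Pow V" and c: "conn_contains S t"
  shows "U \<subseteq> t \<Longrightarrow> \<Union>U \<noteq> {} \<Longrightarrow> \<delta> (\<Union>U) \<le> (\<Sum>R\<in>U. \<delta> R) \<Longrightarrow> \<delta> (\<Union>t) \<le> (\<Sum>R\<in>t. \<delta> R)"
proof (induction "card (t - U)" arbitrary: U rule: less_induct)
  case less
  have ft: "finite t" using V t by (meson finite_Pow_iff finite_subset)
  show ?case
  proof (cases "\<exists>e\<in>t - U. e \<inter> \<Union>U \<noteq> {}")
    case True
    then obtain e where e: "e \<in> t" "e \<notin> U" "e \<inter> \<Union>U \<noteq> {}" by blast
    have fU: "finite U" using less.prems(1) ft finite_subset by auto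
    have "card (t - insert e U) < card (t - U)"
      using e ft by (metis Diff_insert card_Diff1_less finite_Diff DiffI)
    moreover have "insert e U \<subseteq> t" using e less.prems by auto
    moreover have "\<Union>(insert e U) \<noteq> {}" using less.prems by auto
    moreover have "\<delta> (\<Union>(insert e U)) \<le> (\<Sum>R\<in>insert e U. \<delta> R)"
    proof -
      have "\<Union>(insert e U) = \<Union>U \<union> e" by auto
      moreover have "\<delta> (\<Union>U \<union> e) \<le> \<delta> (\<Union>U) + \<delta> e"
        using div_sub[OF d, of "\<Union>U" e] e less.prems t by auto
      moreover have "(\<Sum>R\<in>insert e U. \<delta> R) = \<delta> e + (\<Sum>R\<in>U. \<delta> R)" using fU e by simp
      ultimately show ?thesis using less.prems(3) by simp
    qed
    ultimately show ?thesis using less.hyps by blast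
  next
    case False
    hence cl: "\<forall>e\<in>t - U. e \<inter> \<Union>U = {}" by blast
    obtain x where x: "x \<in> \<Union>U" using less.prems(2) by auto
    have "\<Union>t \<subseteq> \<Union>U"
    proof
      fix y assume y: "y \<in> \<Union>t"
      have "x \<in> \<Union>t" using x less.prems(1) by auto
      hence "(x, y) \<in> (hrel t)\<^sup>*" using c y unfolding conn_contains_iff by blast
      thus "y \<in> \<Union>U" using closed_hrel[OF _ x less.prems(1) cl] by blast
    qed
    hence eq: "\<Union>t = \<Union>U" using less.prems(1) by auto
    have "(\<Sum>R\<in>U. \<delta> R) \<le> (\<Sum>R\<in>t. \<delta> R)"
      using ft less.prems(1) t by (intro sum_mono2) (auto intro: div_nonneg[OF d])
    thus ?thesis using eq less.prems(3) by simp
  qed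
qed

lemma div_tree:
  assumes d: "diversity V \<delta>" and V: "finite V" and t: "t \<subseteq> Pow V" and c: "conn_contains S t"
    and S: "S \<subseteq> V"
  shows "\<delta> S \<le> (\<Sum>R\<in>t. \<delta> R)"
proof -
  have ft: "finite t" using V t by (meson finite_Pow_iff finite_subset)
  have sn: "0 \<le> (\<Sum>R\<in>t. \<delta> R)" using t by (intro sum_nonneg) (auto intro: div_nonneg[OF d])
  show ?thesis
  proof (cases "\<Union>t = {}")
    case True
    hence "hrel t = {}" unfolding hrel_def by auto
    hence "\<forall>x\<in>S. \<forall>y\<in>S. x = y" using c unfolding conn_contains_iff by auto
    moreover have "finite S" using finite_subset[OF S V] .
    ultimately have "card S \<le> 1" by (simp add: card_le_Suc0_iff_eq)
    thus ?thesis using div_small[OF d S] sn by simp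
  next
    case False
    then obtain e where e: "e \<in> t" "e \<noteq> {}" by auto
    have "\<delta> (\<Union>t) \<le> (\<Sum>R\<in>t. \<delta> R)"
      by (rule div_grow[OF d V t c, of "{e}"]) (use e in auto)
    moreover have "\<delta> S \<le> \<delta> (\<Union>t)"
    proof (rule div_mono[OF d])
      show "finite (\<Union>t)" using ft t V by (meson Sup_le_iff PowD finite_subset subsetD)
      show "S \<subseteq> \<Union>t" using conn_cover[OF c False] .
      show "\<Union>t \<subseteq> V" using t by blast
    qed
    ultimately show ?thesis by simp
  qed
qed


lemma sv_set: "{(\<Sum>e\<in>E'. w e) | E'. E' \<subseteq> E \<and> conn_contains A E'} = (\<lambda>E'. \<Sum>e\<in>E'. w e) ` {E'. E' \<subseteq> E \<and> conn_contains A E'}"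
  by auto

lemma sv_fin: "finite E \<Longrightarrow> finite {(\<Sum>e\<in>E'. w e) | E'. E' \<subseteq> E \<and> conn_contains A E'}"
  unfolding sv_set by (rule finite_imageI) (rule finite_subset[of _ "Pow E"], auto)

lemma sv_le: "finite E \<Longrightarrow> E' \<subseteq> E \<Longrightarrow> conn_contains A E' \<Longrightarrow> steiner_val E w A \<le> (\<Sum>e\<in>E'. w e)"
  unfolding steiner_val_def by (rule Min_le[OF sv_fin]) auto

lemma sv_attain:
  assumes "finite E" "E' \<subseteq> E" "conn_contains A E'"
  shows "\<exists>E''\<subseteq>E. conn_contains A E'' \<and> steiner_val E w A = (\<Sum>e\<in>E''. w e)"
proof -
  have "steiner_val E w A \<in> {(\<Sum>e\<in>E'. w e) | E'. E' \<subseteq> E \<and> conn_contains A E'}"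
    unfolding steiner_val_def by (rule Min_in[OF sv_fin[OF assms(1)]]) (use assms in auto)
  thus ?thesis by auto
qed

lemma sum_union_le:
  assumes "finite X" "finite Y" "\<forall>e\<in>X \<union> Y. (0::real) \<le> w e"
  shows "(\<Sum>e\<in>X \<union> Y. w e) \<le> (\<Sum>e\<in>X. w e) + (\<Sum>e\<in>Y. w e)"
proof -
  have "(\<Sum>e\<in>X \<union> Y. w e) + (\<Sum>e\<in>X \<inter> Y. w e) = (\<Sum>e\<in>X. w e) + (\<Sum>e\<in>Y. w e)"
    using sum.union_inter[OF assms(1,2)] .
  moreover have "0 \<le> (\<Sum>e\<in>X \<inter> Y. w e)" using assms(3) by (intro sum_nonneg) auto
  ultimately show ?thesis by linarith
qed

lemma steiner_div:
  assumes V: "finite V" and E: "E \<subseteq> Pow V" and w: "\<forall>e\<in>E. 0 \<le> w e"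
    and dt: "\<forall>S. S \<subseteq> V \<longrightarrow> (\<forall>t\<in>trees V S. t \<subseteq> E \<longrightarrow> d S \<le> (\<Sum>R\<in>t. w R))"
  shows "\<exists>\<delta>. diversity V \<delta> \<and> (\<forall>S\<subseteq>V. d S \<le> \<delta> S) \<and> (\<forall>R\<in>E. \<delta> R \<le> w R) \<and> supported_on V E \<delta>"
proof -
  have fE: "finite E" using finite_subset[OF E] V by simp
  define cn where "cn A \<longleftrightarrow> (\<exists>E'\<subseteq>E. conn_contains A E')" for A
  define M where "M = (\<Sum>e\<in>E. w e) + (\<Sum>S\<in>Pow V. \<bar>d S\<bar>)"
  define \<delta> where "\<delta> A = (if cn A then steiner_val E w A else M)" for A
  have sumE: "(\<Sum>e\<in>E'. w e) \<le> (\<Sum>e\<in>E. w e)" if "E' \<subseteq> E" for E'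
    using that fE w by (intro sum_mono2) auto
  have sumnn: "0 \<le> (\<Sum>e\<in>E'. w e)" if "E' \<subseteq> E" for E'
    using that w by (intro sum_nonneg) auto
  have M0: "(\<Sum>e\<in>E. w e) \<le> M" unfolding M_def by (simp add: sum_nonneg)
  have sv_bd: "0 \<le> steiner_val E w A \<and> steiner_val E w A \<le> M" if "cn A" for A
  proof -
    from that obtain E' where "E' \<subseteq> E" "conn_contains A E'" unfolding cn_def by blast
    from sv_attain[OF fE this] obtain E'' where E'': "E'' \<subseteq> E" "steiner_val E w A = (\<Sum>e\<in>E''. w e)" by blast
    have "(\<Sum>e\<in>E''. w e) \<le> (\<Sum>e\<in>E. w e)" by (rule sumE[OF E''(1)])
    moreover have "0 \<le> (\<Sum>e\<in>E''. w e)" by (rule sumnn[OF E''(1)])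
    ultimately show ?thesis using E''(2) M0 by linarith
  qed
  have dnn: "0 \<le> \<delta> A" "\<delta> A \<le> M" for A
    unfolding \<delta>_def using sv_bd M0 sumnn[of E] by force+
  have div: "diversity V \<delta>"
    unfolding diversity_def
  proof (intro conjI allI impI)
    fix A assume "A \<subseteq> V" thus "0 \<le> \<delta> A" using dnn by simp
  next
    fix A assume A: "A \<subseteq> V" "card A \<le> 1"
    have "finite A" using A V finite_subset by blast
    hence c0: "conn_contains A {}" using A conn_empty_card by blast
    hence "cn A" unfolding cn_def by blast
    moreover have "steiner_val E w A \<le> 0" using sv_le[OF fE _ c0, of w] by simp
    ultimately show "\<delta> A = 0" using sv_bd unfolding \<delta>_def by force
  next
    fix A B C assume ABC: "A \<subseteq> V" "B \<subseteq> V" "C \<subseteq> V" "B \<noteq> {}"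
    show "\<delta> (A \<union> C) \<le> \<delta> (A \<union> B) + \<delta> (B \<union> C)"
    proof (cases "cn (A \<union> B) \<and> cn (B \<union> C)")
      case True
      then obtain E1 E2 where e: "E1 \<subseteq> E" "conn_contains (A \<union> B) E1" "E2 \<subseteq> E" "conn_contains (B \<union> C) E2"
        unfolding cn_def by blast
      from sv_attain[OF fE e(1,2)] obtain F1 where F1: "F1 \<subseteq> E" "conn_contains (A \<union> B) F1"
          "steiner_val E w (A \<union> B) = (\<Sum>e\<in>F1. w e)" by blast
      from sv_attain[OF fE e(3,4)] obtain F2 where F2: "F2 \<subseteq> E" "conn_contains (B \<union> C) F2"
          "steiner_val E w (B \<union> C) = (\<Sum>e\<in>F2. w e)" by blast
      have cu: "conn_contains (A \<union> C) (F1 \<union> F2)" using conn_union[OF F1(2) F2(2) ABC(4)] .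
      have "F1 \<union> F2 \<subseteq> E" using F1(1) F2(1) by (rule Un_least)
      hence "cn (A \<union> C)" using cu unfolding cn_def by blast
      moreover have "steiner_val E w (A \<union> C) \<le> (\<Sum>e\<in>F1 \<union> F2. w e)"
        using sv_le[OF fE _ cu] F1 F2 by auto
      moreover have "(\<Sum>e\<in>F1 \<union> F2. w e) \<le> (\<Sum>e\<in>F1. w e) + (\<Sum>e\<in>F2. w e)"
        using F1 F2 fE w by (intro sum_union_le) (auto intro: finite_subset)
      ultimately show ?thesis using True F1(3) F2(3) unfolding \<delta>_def by simp
    next
      case False
      hence "\<delta> (A \<union> B) = M \<or> \<delta> (B \<union> C) = M" unfolding \<delta>_def by auto
      thus ?thesis using dnn[of "A \<union> C"] dnn[of "A \<union> B"] dnn[of "B \<union> C"] by linarith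
    qed
  qed
  have dle: "d S \<le> \<delta> S" if S: "S \<subseteq> V" for S
  proof (cases "cn S")
    case True
    then obtain E' where "E' \<subseteq> E" "conn_contains S E'" unfolding cn_def by blast
    from sv_attain[OF fE this] obtain E'' where E'': "E'' \<subseteq> E" "conn_contains S E''"
      "steiner_val E w S = (\<Sum>e\<in>E''. w e)" by blast
    from tree_sub[OF V _ E''(2)] E'' E obtain t where t: "t \<subseteq> E''" "t \<in> trees V S" by blast
    have "d S \<le> (\<Sum>R\<in>t. w R)" using dt S t E'' by blast
    also have "\<dots> \<le> (\<Sum>e\<in>E''. w e)" using t E'' w fE by (intro sum_mono2) (auto intro: finite_subset)
    finally show ?thesis using True E'' unfolding \<delta>_def by simp
  next
    case False
    have "d S \<le> \<bar>d S\<bar>" by simp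
    also have "\<dots> \<le> (\<Sum>S\<in>Pow V. \<bar>d S\<bar>)"
      using S V by (intro member_le_sum) auto
    also have "\<dots> \<le> M" unfolding M_def using sumnn[of E] by simp
    finally show ?thesis using False unfolding \<delta>_def by simp
  qed
  have wle: "\<delta> R \<le> w R" if "R \<in> E" for R
  proof -
    have "cn R" using that conn_single unfolding cn_def by blast
    moreover have "steiner_val E w R \<le> (\<Sum>e\<in>{R}. w e)" using sv_le[OF fE _ conn_single] that by blast
    ultimately show ?thesis unfolding \<delta>_def by simp
  qed
  have sup: "supported_on V E \<delta>"
    unfolding supported_on_def using w by (intro exI[of _ w]) (auto simp: \<delta>_def cn_def)
  show ?thesis using div dle wle sup by blast
qed


lemma sum_if_sub: "finite V \<Longrightarrow> t \<subseteq> Pow V \<Longrightarrow> (\<Sum>R\<in>t. g R) = (\<Sum>R\<in>Pow V. if R \<in> t then g R else 0)"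
proof -
  assume a: "finite V" "t \<subseteq> Pow V"
  have "{R \<in> Pow V. R \<in> t} = t" using a(2) by auto
  hence "(\<Sum>R\<in>t. g R) = (\<Sum>R\<in>{R \<in> Pow V. R \<in> t}. g R)" by simp
  also have "\<dots> = (\<Sum>R\<in>Pow V. if R \<in> t then g R else 0)"
    using a(1) by (intro sum.inter_filter) simp
  finally show ?thesis .
qed

lemma weak:
  assumes V: "finite V" and C: "\<forall>R\<subseteq>V. C R \<ge> 0" and feas: "hsp_feasible V C D f"
    and d: "diversity V \<delta>"
  shows "f * dotp V D \<delta> \<le> dotp V C \<delta>"
proof -
  obtain z where z0: "\<forall>S\<in>Pow V. \<forall>t\<in>trees V S. z t S \<ge> 0"
    and cap: "\<forall>R\<in>Pow V. (\<Sum>S\<in>Pow V. \<Sum>t\<in>{t\<in>trees V S. R \<in> t}. z t S) \<le> C R"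
    and dem: "\<forall>S\<in>Pow V. (\<Sum>t\<in>trees V S. z t S) = f * D S"
    using feas unfolding hsp_feasible_def by blast
  have fT: "finite (trees V S)" for S using trees_fin[OF V] .
  have "f * dotp V D \<delta> = (\<Sum>S\<in>Pow V. (\<Sum>t\<in>trees V S. z t S) * \<delta> S)"
    unfolding dotp_def sum_distrib_left using dem by (intro sum.cong) auto
  also have "\<dots> \<le> (\<Sum>S\<in>Pow V. \<Sum>t\<in>trees V S. z t S * (\<Sum>R\<in>t. \<delta> R))"
  proof (intro sum_mono)
    fix S assume S: "S \<in> Pow V"
    have "(\<Sum>t\<in>trees V S. z t S) * \<delta> S = (\<Sum>t\<in>trees V S. z t S * \<delta> S)" by (simp add: sum_distrib_right)
    also have "\<dots> \<le> (\<Sum>t\<in>trees V S. z t S * (\<Sum>R\<in>t. \<delta> R))"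
    proof (intro sum_mono mult_left_mono)
      fix t assume t: "t \<in> trees V S"
      show "0 \<le> z t S" using z0 S t by blast
      show "\<delta> S \<le> (\<Sum>R\<in>t. \<delta> R)"
        using div_tree[OF d V trees_sub[OF t] _] t S unfolding trees_def by blast
    qed
    finally show "(\<Sum>t\<in>trees V S. z t S) * \<delta> S \<le> (\<Sum>t\<in>trees V S. z t S * (\<Sum>R\<in>t. \<delta> R))" .
  qed
  also have "\<dots> = (\<Sum>S\<in>Pow V. \<Sum>t\<in>trees V S. \<Sum>R\<in>Pow V. if R \<in> t then z t S * \<delta> R else 0)"
    by (intro sum.cong refl) (simp add: sum_if_sub[OF V trees_sub] sum_distrib_left if_distrib cong: if_cong)
  also have "\<dots> = (\<Sum>R\<in>Pow V. \<Sum>S\<in>Pow V. \<Sum>t\<in>trees V S. if R \<in> t then z t S * \<delta> R else 0)"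
    by (subst sum.swap) (simp add: sum.swap[of _ "trees V _"])
  also have "\<dots> = (\<Sum>R\<in>Pow V. \<delta> R * (\<Sum>S\<in>Pow V. \<Sum>t\<in>{t\<in>trees V S. R \<in> t}. z t S))"
    by (intro sum.cong refl) (simp add: sum.inter_filter[OF fT] sum_distrib_left mult.commute if_distrib cong: if_cong)
  also have "\<dots> \<le> (\<Sum>R\<in>Pow V. \<delta> R * C R)"
    using cap div_nonneg[OF d] by (intro sum_mono mult_left_mono) auto
  also have "\<dots> = dotp V C \<delta>" unfolding dotp_def by (simp add: mult.commute)
  finally show ?thesis .
qed


lemma ifm: "(if P then (c::real) else 0) * y = (if P then c * y else 0)" by simp

lemma app1:
  assumes V: "finite V" and C: "\<forall>R\<subseteq>V. C R \<ge> 0" and D: "\<forall>S\<subseteq>V. D S \<ge> 0"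
    and f: "f \<ge> 0" and nf: "\<not> hsp_feasible V C D f"
  shows "\<exists>\<delta>. diversity V \<delta> \<and> dotp V D \<delta> > 0 \<and> dotp V C \<delta> < f * dotp V D \<delta>"
proof -
  define P where "P = Sigma (Pow V) (trees V)"
  define K where "K = Pow V <+> Pow V"
  define J where "J = P <+> Pow V"
  define a where "a j k = (case j of Inl (S, t) \<Rightarrow> (case k of Inl R \<Rightarrow> if R \<in> t then (1::real) else 0
                                                     | Inr S' \<Rightarrow> if S' = S then 1 else 0)
                            | Inr R0 \<Rightarrow> (case k of Inl R \<Rightarrow> if R = R0 then 1 else 0 | Inr _ \<Rightarrow> 0))"
    for j :: "'a set \<times> 'a set set + 'a set" and k :: "'a set + 'a set"
  define b where "b k = (case k of Inl R \<Rightarrow> C R | Inr S \<Rightarrow> f * D S)" for k :: "'a set + 'a set"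
  have fT: "finite (trees V S)" for S using trees_fin[OF V] .
  have fP: "finite P" unfolding P_def using V fT by auto
  have fK: "finite K" unfolding K_def using V by auto
  have fJ: "finite J" unfolding J_def using V fP by auto
  from farkas[OF fK fJ, of b a] show ?thesis
  proof
    assume "\<exists>l. (\<forall>j\<in>J. l j \<ge> 0) \<and> (\<forall>k\<in>K. b k = (\<Sum>j\<in>J. l j * a j k))"
    then obtain l where l0: "\<forall>j\<in>J. l j \<ge> 0" and lk: "\<forall>k\<in>K. b k = (\<Sum>j\<in>J. l j * a j k)" by blast
    define z where "z t S = l (Inl (S, t))" for t S
    have "hsp_feasible V C D f"
      unfolding hsp_feasible_def
    proof (intro exI[of _ z] conjI ballI)
      fix S t assume "S \<in> Pow V" "t \<in> trees V S"
      thus "0 \<le> z t S" using l0 unfolding z_def J_def P_def by auto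
    next
      fix R assume R: "R \<in> Pow V"
      have "C R = (\<Sum>j\<in>J. l j * a j (Inl R))" using lk R unfolding K_def b_def by force
      also have "\<dots> = (\<Sum>p\<in>P. l (Inl p) * a (Inl p) (Inl R)) + (\<Sum>R0\<in>Pow V. l (Inr R0) * a (Inr R0) (Inl R))"
        unfolding J_def by (simp add: sum.Plus[OF fP] V comp_def)
      also have "(\<Sum>R0\<in>Pow V. l (Inr R0) * a (Inr R0) (Inl R)) = l (Inr R)"
        using R V unfolding a_def by (simp add: if_distrib cong: if_cong)
      also have "(\<Sum>p\<in>P. l (Inl p) * a (Inl p) (Inl R)) = (\<Sum>S\<in>Pow V. \<Sum>t\<in>trees V S. if R \<in> t then z t S else 0)"
        unfolding P_def z_def a_def using V fT by (subst sum.Sigma) (auto simp: if_distrib intro!: sum.cong split: prod.splits)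
      also have "\<dots> = (\<Sum>S\<in>Pow V. \<Sum>t\<in>{t\<in>trees V S. R \<in> t}. z t S)"
        by (rule sum.cong[OF refl], rule sum.inter_filter[OF fT, symmetric])
      finally have eq: "C R = (\<Sum>S\<in>Pow V. \<Sum>t\<in>{t\<in>trees V S. R \<in> t}. z t S) + l (Inr R)" .
      have "l (Inr R) \<ge> 0" using l0 R unfolding J_def by auto
      thus "(\<Sum>S\<in>Pow V. \<Sum>t\<in>{t\<in>trees V S. R \<in> t}. z t S) \<le> C R" using eq by linarith
    next
      fix S assume S: "S \<in> Pow V"
      have "Inr S \<in> K" using S unfolding K_def by auto
      hence "b (Inr S) = (\<Sum>j\<in>J. l j * a j (Inr S))" using lk by blast
      hence "f * D S = (\<Sum>j\<in>J. l j * a j (Inr S))" by (simp add: b_def)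
      also have "\<dots> = (\<Sum>p\<in>P. l (Inl p) * a (Inl p) (Inr S)) + (\<Sum>R0\<in>Pow V. l (Inr R0) * a (Inr R0) (Inr S))"
        unfolding J_def by (simp add: sum.Plus[OF fP] V comp_def)
      also have "(\<Sum>R0\<in>Pow V. l (Inr R0) * a (Inr R0) (Inr S)) = 0"
        unfolding a_def by simp
      also have "(\<Sum>p\<in>P. l (Inl p) * a (Inl p) (Inr S)) = (\<Sum>S'\<in>Pow V. \<Sum>t\<in>trees V S'. if S = S' then z t S' else 0)"
        unfolding P_def z_def a_def using V fT by (subst sum.Sigma) (auto simp: if_distrib intro!: sum.cong split: prod.splits)
      also have "\<dots> = (\<Sum>S'\<in>Pow V. if S = S' then (\<Sum>t\<in>trees V S'. z t S') else 0)"
        by (intro sum.cong refl) auto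
      also have "\<dots> = (\<Sum>t\<in>trees V S. z t S)" using S V by simp
      finally show "(\<Sum>t\<in>trees V S. z t S) = f * D S" by simp
    qed
    thus ?thesis using nf by blast
  next
    assume "\<exists>x. (\<forall>j\<in>J. ip K (a j) x \<le> 0) \<and> ip K b x > 0"
    then obtain x where xj: "\<forall>j\<in>J. ip K (a j) x \<le> 0" and xb: "ip K b x > 0" by blast
    define y where "y R = - x (Inl R)" for R
    define d where "d S = x (Inr S)" for S
    have ipK: "ip K u x = (\<Sum>R\<in>Pow V. u (Inl R) * x (Inl R)) + (\<Sum>S\<in>Pow V. u (Inr S) * x (Inr S))" for u
      unfolding ip_def K_def by (simp add: sum.Plus V comp_def)
    have y0: "\<forall>R\<in>Pow V. 0 \<le> y R"
    proof
      fix R assume R: "R \<in> Pow V"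
      have "ip K (a (Inr R)) x \<le> 0" using xj R unfolding J_def by auto
      moreover have "ip K (a (Inr R)) x = x (Inl R)" unfolding ipK a_def using R V
        by (simp add: ifm cong: if_cong)
      ultimately show "0 \<le> y R" unfolding y_def by simp
    qed
    have dt: "\<forall>S. S \<subseteq> V \<longrightarrow> (\<forall>t\<in>trees V S. t \<subseteq> Pow V \<longrightarrow> d S \<le> (\<Sum>R\<in>t. y R))"
    proof (intro allI impI ballI)
      fix S t assume S: "S \<subseteq> V" and t: "t \<in> trees V S" and "t \<subseteq> Pow V"
      have "ip K (a (Inl (S, t))) x \<le> 0" using xj S t unfolding J_def P_def by auto
      moreover have "ip K (a (Inl (S, t))) x = (\<Sum>R\<in>Pow V. if R \<in> t then x (Inl R) else 0) + x (Inr S)"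
        unfolding ipK a_def using S V by (simp add: ifm cong: if_cong)
      moreover have "(\<Sum>R\<in>Pow V. if R \<in> t then x (Inl R) else 0) = - (\<Sum>R\<in>t. y R)"
        unfolding y_def sum_if_sub[OF V trees_sub[OF t]] by (simp add: sum_negf[symmetric] if_distrib cong: if_cong)
      ultimately show "d S \<le> (\<Sum>R\<in>t. y R)" unfolding d_def by simp
    qed
    obtain \<delta> where dv: "diversity V \<delta>" and dd: "\<forall>S\<subseteq>V. d S \<le> \<delta> S" and dw: "\<forall>R\<in>Pow V. \<delta> R \<le> y R"
      using steiner_div[OF V subset_refl y0 dt] by blast
    have bx: "ip K b x = f * (\<Sum>S\<in>Pow V. D S * d S) - (\<Sum>R\<in>Pow V. C R * y R)"
      unfolding ipK b_def y_def d_def by (simp add: sum_distrib_left sum_negf[symmetric] mult.assoc)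
    have Cy: "0 \<le> (\<Sum>R\<in>Pow V. C R * y R)" using C y0 by (intro sum_nonneg) auto
    have Dd: "(\<Sum>S\<in>Pow V. D S * d S) \<le> dotp V D \<delta>"
      unfolding dotp_def using D dd by (intro sum_mono mult_left_mono) auto
    have Cd: "dotp V C \<delta> \<le> (\<Sum>R\<in>Pow V. C R * y R)"
      unfolding dotp_def using C dw by (intro sum_mono mult_left_mono) auto
    have pos: "0 < f * (\<Sum>S\<in>Pow V. D S * d S)" using bx xb Cy by linarith
    hence "0 < (\<Sum>S\<in>Pow V. D S * d S)" using f by (simp add: zero_less_mult_iff)
    hence Dpos: "0 < dotp V D \<delta>" using Dd by linarith
    have "f * (\<Sum>S\<in>Pow V. D S * d S) \<le> f * dotp V D \<delta>" using Dd f by (rule mult_left_mono)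
    hence "dotp V C \<delta> < f * dotp V D \<delta>" using Cd bx xb by linarith
    thus ?thesis using dv Dpos by blast
  qed
qed


lemma ifm2: "(y::real) * (if P then c else 0) = (if P then y * c else 0)" by simp

lemma app2:
  assumes V: "finite V" and C: "\<forall>R\<subseteq>V. C R \<ge> 0" and D: "\<forall>S\<subseteq>V. D S \<ge> 0"
    and rho: "\<rho> \<ge> 0" and bound: "\<forall>f. hsp_feasible V C D f \<longrightarrow> f \<le> \<rho>"
  shows "\<exists>\<delta>. diversity V \<delta> \<and> dotp V D \<delta> > 0 \<and> dotp V C \<delta> \<le> \<rho> * dotp V D \<delta> \<and>
             supported_on V {e. e \<subseteq> V \<and> C e > 0} \<delta>"
proof -
  define E where "E = {e. e \<subseteq> V \<and> C e > 0}"
  define P where "P = Sigma (Pow V) (\<lambda>S. {t\<in>trees V S. t \<subseteq> E})"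
  define K where "K = E <+> Pow V"
  define J where "J = insert None (Some ` (E <+> P))"
  define a where "a j k = (case j of None \<Rightarrow> (case k of Inl R \<Rightarrow> C R | Inr S \<Rightarrow> - (\<rho> * D S))
      | Some (Inl R0) \<Rightarrow> (case k of Inl R \<Rightarrow> if R = R0 then - (1::real) else 0 | Inr _ \<Rightarrow> 0)
      | Some (Inr (S0, t)) \<Rightarrow> (case k of Inl R \<Rightarrow> if R \<in> t then - 1 else 0 | Inr S \<Rightarrow> if S = S0 then 1 else 0))"
    for j :: "('a set + 'a set \<times> 'a set set) option" and k :: "'a set + 'a set"
  define b where "b k = (case k of Inl R \<Rightarrow> 0 | Inr S \<Rightarrow> D S)" for k :: "'a set + 'a set"
  have ES: "E \<subseteq> Pow V" unfolding E_def by auto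
  have fE: "finite E" using finite_subset[OF ES] V by simp
  have fT: "finite (trees V S)" for S using trees_fin[OF V] .
  have fP: "finite P" unfolding P_def using V fT by auto
  have fK: "finite K" unfolding K_def using V fE by auto
  have fJ: "finite J" unfolding J_def using fE fP by auto
  have sumJ: "(\<Sum>j\<in>J. g j) = g None + (\<Sum>R\<in>E. g (Some (Inl R))) + (\<Sum>p\<in>P. g (Some (Inr p)))"
    for g :: "_ \<Rightarrow> real"
  proof -
    have "(\<Sum>j\<in>J. g j) = g None + (\<Sum>j\<in>Some ` (E <+> P). g j)"
      unfolding J_def using fE fP by (subst sum.insert) auto
    also have "(\<Sum>j\<in>Some ` (E <+> P). g j) = (\<Sum>q\<in>E <+> P. g (Some q))"
      by (subst sum.reindex) auto
    also have "\<dots> = (\<Sum>R\<in>E. g (Some (Inl R))) + (\<Sum>p\<in>P. g (Some (Inr p)))"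
      using fE fP by (simp add: sum.Plus comp_def)
    finally show ?thesis by simp
  qed
  have sumP: "(\<Sum>p\<in>P. g p) = (\<Sum>S\<in>Pow V. \<Sum>t\<in>trees V S. if t \<subseteq> E then g (S, t) else 0)"
    for g :: "_ \<Rightarrow> real"
  proof -
    have "(\<Sum>p\<in>P. g p) = (\<Sum>S\<in>Pow V. \<Sum>t\<in>{t\<in>trees V S. t \<subseteq> E}. g (S, t))"
      unfolding P_def using V fT by (subst sum.Sigma) auto
    also have "\<dots> = (\<Sum>S\<in>Pow V. \<Sum>t\<in>trees V S. if t \<subseteq> E then g (S, t) else 0)"
      by (rule sum.cong[OF refl], rule sum.inter_filter[OF fT])
    finally show ?thesis .
  qed
  have ipK: "ip K u x = (\<Sum>R\<in>E. u (Inl R) * x (Inl R)) + (\<Sum>S\<in>Pow V. u (Inr S) * x (Inr S))" for u x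
    unfolding ip_def K_def by (simp add: sum.Plus V fE comp_def)
  from farkas[OF fK fJ, of b a] show ?thesis
  proof
    assume "\<exists>l. (\<forall>j\<in>J. l j \<ge> 0) \<and> (\<forall>k\<in>K. b k = (\<Sum>j\<in>J. l j * a j k))"
    then obtain l where l0: "\<forall>j\<in>J. l j \<ge> 0" and lk: "\<forall>k\<in>K. b k = (\<Sum>j\<in>J. l j * a j k)" by blast
    define \<mu> where "\<mu> = l None"
    define z' where "z' p = l (Some (Inr p))" for p
    have mu0: "\<mu> \<ge> 0" using l0 unfolding \<mu>_def J_def by auto
    have z0: "z' p \<ge> 0" if "p \<in> P" for p using l0 that unfolding z'_def J_def by auto
    define LE where "LE R = (\<Sum>S\<in>Pow V. \<Sum>t\<in>trees V S. if t \<subseteq> E then (if R \<in> t then z' (S, t) else 0) else 0)" for R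
    have capE: "LE R \<le> \<mu> * C R" if R: "R \<in> E" for R
    proof -
      have "Inl R \<in> K" using R unfolding K_def by auto
      hence "b (Inl R) = (\<Sum>j\<in>J. l j * a j (Inl R))" using lk by blast
      also have "\<dots> = \<mu> * C R + (\<Sum>R0\<in>E. l (Some (Inl R0)) * (if R = R0 then - 1 else 0))
                       + (\<Sum>p\<in>P. l (Some (Inr p)) * (if R \<in> snd p then - 1 else 0))"
        unfolding sumJ a_def \<mu>_def by (simp add: case_prod_beta)
      also have "(\<Sum>R0\<in>E. l (Some (Inl R0)) * (if R = R0 then - 1 else 0)) = - l (Some (Inl R))"
        using R fE by (simp add: ifm2 cong: if_cong)
      also have "(\<Sum>p\<in>P. l (Some (Inr p)) * (if R \<in> snd p then - 1 else 0)) = - LE R"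
        unfolding sumP LE_def z'_def sum_negf[symmetric] by (intro sum.cong refl) auto
      finally have "0 = \<mu> * C R - l (Some (Inl R)) - LE R" by (simp add: b_def)
      moreover have "l (Some (Inl R)) \<ge> 0" using l0 R unfolding J_def by auto
      ultimately show ?thesis by linarith
    qed
    have dem: "(\<Sum>t\<in>trees V S. if t \<subseteq> E then z' (S, t) else 0) = (1 + \<mu> * \<rho>) * D S" if S: "S \<in> Pow V" for S
    proof -
      have "Inr S \<in> K" using S unfolding K_def by auto
      hence "b (Inr S) = (\<Sum>j\<in>J. l j * a j (Inr S))" using lk by blast
      also have "\<dots> = - (\<mu> * (\<rho> * D S)) + (\<Sum>p\<in>P. l (Some (Inr p)) * (if S = fst p then 1 else 0))"
        unfolding sumJ a_def \<mu>_def by (simp add: case_prod_beta)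
      also have "(\<Sum>p\<in>P. l (Some (Inr p)) * (if S = fst p then 1 else 0))
           = (\<Sum>S'\<in>Pow V. if S = S' then (\<Sum>t\<in>trees V S'. if t \<subseteq> E then z' (S', t) else 0) else 0)"
        unfolding sumP z'_def
      proof (rule sum.cong[OF refl])
        fix S' show "(\<Sum>t\<in>trees V S'. if t \<subseteq> E then l (Some (Inr (S', t))) * (if S = fst (S', t) then 1 else 0) else 0)
            = (if S = S' then (\<Sum>t\<in>trees V S'. if t \<subseteq> E then l (Some (Inr (S', t))) else 0) else 0)"
          unfolding fst_conv by (cases "S = S'") (simp_all cong: if_cong)
      qed
      also have "\<dots> = (\<Sum>t\<in>trees V S. if t \<subseteq> E then z' (S, t) else 0)" using S V by simp
      finally show ?thesis by (simp add: b_def algebra_simps)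
    qed
    define c where "c = (if \<mu> > 0 then 1 / \<mu> else \<rho> + 1)"
    have c0: "c \<ge> 0" unfolding c_def using rho by auto
    have cmu: "c * \<mu> \<le> 1" unfolding c_def using mu0 by auto
    define z where "z t S = (if t \<subseteq> E then c * z' (S, t) else 0)" for t S
    have "hsp_feasible V C D (c * (1 + \<mu> * \<rho>))"
      unfolding hsp_feasible_def
    proof (intro exI[of _ z] conjI ballI)
      fix S t assume "S \<in> Pow V" "t \<in> trees V S"
      thus "0 \<le> z t S" unfolding z_def using z0 c0 unfolding P_def by auto
    next
      fix R assume R: "R \<in> Pow V"
      have "(\<Sum>S\<in>Pow V. \<Sum>t\<in>{t\<in>trees V S. R \<in> t}. z t S)
          = (\<Sum>S\<in>Pow V. \<Sum>t\<in>trees V S. if R \<in> t then z t S else 0)"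
        by (rule sum.cong[OF refl], rule sum.inter_filter[OF fT])
      also have "\<dots> = c * LE R"
        unfolding LE_def z_def sum_distrib_left by (intro sum.cong refl) auto
      finally have eq: "(\<Sum>S\<in>Pow V. \<Sum>t\<in>{t\<in>trees V S. R \<in> t}. z t S) = c * LE R" .
      show "(\<Sum>S\<in>Pow V. \<Sum>t\<in>{t\<in>trees V S. R \<in> t}. z t S) \<le> C R"
      proof (cases "R \<in> E")
        case True
        have "c * LE R \<le> c * (\<mu> * C R)" using capE[OF True] c0 by (rule mult_left_mono)
        also have "\<dots> = (c * \<mu>) * C R" by simp
        also have "\<dots> \<le> 1 * C R" using cmu C R by (intro mult_right_mono) auto
        finally show ?thesis using eq by simp
      next
        case False
        have "LE R = 0" unfolding LE_def using False by (intro sum.neutral ballI) auto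
        thus ?thesis using eq C R by simp
      qed
    next
      fix S assume S: "S \<in> Pow V"
      have "(\<Sum>t\<in>trees V S. z t S) = c * (\<Sum>t\<in>trees V S. if t \<subseteq> E then z' (S, t) else 0)"
        unfolding z_def sum_distrib_left by (intro sum.cong refl) auto
      also have "\<dots> = c * (1 + \<mu> * \<rho>) * D S" using dem[OF S] by simp
      finally show "(\<Sum>t\<in>trees V S. z t S) = c * (1 + \<mu> * \<rho>) * D S" .
    qed
    hence "c * (1 + \<mu> * \<rho>) \<le> \<rho>" using bound by blast
    moreover have "c * (1 + \<mu> * \<rho>) > \<rho>"
    proof (cases "\<mu> > 0")
      case True
      hence "c * (1 + \<mu> * \<rho>) = 1 / \<mu> + \<rho>" unfolding c_def by (simp add: field_simps)
      thus ?thesis using True by simp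
    next
      case False
      hence "\<mu> = 0" using mu0 by simp
      thus ?thesis unfolding c_def by simp
    qed
    ultimately show ?thesis by linarith
  next
    assume "\<exists>x. (\<forall>j\<in>J. ip K (a j) x \<le> 0) \<and> ip K b x > 0"
    then obtain x where xj: "\<forall>j\<in>J. ip K (a j) x \<le> 0" and xb: "ip K b x > 0" by blast
    define y where "y R = x (Inl R)" for R
    define d where "d S = x (Inr S)" for S
    have y0: "\<forall>R\<in>E. 0 \<le> y R"
    proof
      fix R assume R: "R \<in> E"
      have "ip K (a (Some (Inl R))) x \<le> 0" using xj R unfolding J_def by auto
      moreover have "ip K (a (Some (Inl R))) x = - x (Inl R)" unfolding ipK a_def using R fE
        by (simp add: ifm cong: if_cong)
      ultimately show "0 \<le> y R" unfolding y_def by simp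
    qed
    have dt: "\<forall>S. S \<subseteq> V \<longrightarrow> (\<forall>t\<in>trees V S. t \<subseteq> E \<longrightarrow> d S \<le> (\<Sum>R\<in>t. y R))"
    proof (intro allI impI ballI)
      fix S t assume S: "S \<subseteq> V" and t: "t \<in> trees V S" and tE: "t \<subseteq> E"
      have "ip K (a (Some (Inr (S, t)))) x \<le> 0" using xj S t tE unfolding J_def P_def by auto
      moreover have "ip K (a (Some (Inr (S, t)))) x = (\<Sum>R\<in>E. if R \<in> t then - x (Inl R) else 0) + x (Inr S)"
        unfolding ipK a_def using S V by (simp add: ifm cong: if_cong)
      moreover have "(\<Sum>R\<in>E. if R \<in> t then - x (Inl R) else 0) = - (\<Sum>R\<in>t. y R)"
      proof -
        have "{R \<in> E. R \<in> t} = t" using tE by auto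
        hence "(\<Sum>R\<in>t. y R) = (\<Sum>R\<in>{R \<in> E. R \<in> t}. y R)" by simp
        also have "\<dots> = (\<Sum>R\<in>E. if R \<in> t then y R else 0)" by (rule sum.inter_filter[OF fE])
        finally show ?thesis unfolding y_def by (simp add: sum_negf[symmetric] if_distrib cong: if_cong)
      qed
      ultimately show "d S \<le> (\<Sum>R\<in>t. y R)" unfolding d_def by simp
    qed
    obtain \<delta> where dv: "diversity V \<delta>" and dd: "\<forall>S\<subseteq>V. d S \<le> \<delta> S" and dw: "\<forall>R\<in>E. \<delta> R \<le> y R"
      and sup: "supported_on V E \<delta>"
      using steiner_div[OF V ES y0 dt] by blast
    have bx: "ip K b x = (\<Sum>S\<in>Pow V. D S * d S)"
      unfolding ipK b_def d_def by simp
    have ax: "ip K (a None) x = (\<Sum>R\<in>E. C R * y R) - \<rho> * (\<Sum>S\<in>Pow V. D S * d S)"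
      unfolding ipK a_def y_def d_def by (simp add: sum_distrib_left sum_negf[symmetric] mult.assoc)
    have "ip K (a None) x \<le> 0" using xj unfolding J_def by auto
    hence Cy: "(\<Sum>R\<in>E. C R * y R) \<le> \<rho> * (\<Sum>S\<in>Pow V. D S * d S)" using ax by simp
    have Dd: "(\<Sum>S\<in>Pow V. D S * d S) \<le> dotp V D \<delta>"
      unfolding dotp_def using D dd by (intro sum_mono mult_left_mono) auto
    have CE: "dotp V C \<delta> = (\<Sum>R\<in>E. C R * \<delta> R)"
      unfolding dotp_def
    proof (rule sum.mono_neutral_right)
      show "E \<subseteq> Pow V" by (rule ES)
      show "finite (Pow V)" using V by simp
      show "\<forall>i\<in>Pow V - E. C i * \<delta> i = 0"
      proof
        fix R assume R: "R \<in> Pow V - E"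
        hence "R \<subseteq> V" "\<not> C R > 0" unfolding E_def by auto
        moreover have "C R \<ge> 0" using C \<open>R \<subseteq> V\<close> by blast
        ultimately have "C R = 0" by linarith
        thus "C R * \<delta> R = 0" by simp
      qed
    qed
    have Cd: "(\<Sum>R\<in>E. C R * \<delta> R) \<le> (\<Sum>R\<in>E. C R * y R)"
      using C dw ES by (intro sum_mono mult_left_mono) auto
    have Dpos: "0 < dotp V D \<delta>" using Dd bx xb by linarith
    have "\<rho> * (\<Sum>S\<in>Pow V. D S * d S) \<le> \<rho> * dotp V D \<delta>" using Dd rho by (rule mult_left_mono)
    hence "dotp V C \<delta> \<le> \<rho> * dotp V D \<delta>" using CE Cd Cy by linarith
    thus ?thesis using dv Dpos sup unfolding E_def by blast
  qed
qed


theorem proposition16: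
  fixes V :: "'a set" and C D :: "'a set \<Rightarrow> real"
  assumes "finite V"
    and "\<forall>R\<subseteq>V. C R \<ge> 0"
    and "\<forall>S\<subseteq>V. D S \<ge> 0"
    and "\<exists>\<delta>. diversity V \<delta> \<and> dotp V D \<delta> > 0"
  shows "\<exists>\<delta>. diversity V \<delta> \<and> dotp V D \<delta> > 0 \<and>
             MaxHSP V C D = dotp V C \<delta> / dotp V D \<delta> \<and>
             (\<forall>\<delta>'. diversity V \<delta>' \<and> dotp V D \<delta>' > 0 \<longrightarrow>
                    dotp V C \<delta> / dotp V D \<delta> \<le> dotp V C \<delta>' / dotp V D \<delta>') \<and>
             supported_on V {e. e \<subseteq> V \<and> C e > 0} \<delta>"
proof -
  note V = assms(1) and C = assms(2) and D = assms(3)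
  define Rs where "Rs = {dotp V C \<delta> / dotp V D \<delta> | \<delta>. diversity V \<delta> \<and> dotp V D \<delta> > 0}"
  define \<rho> where "\<rho> = Inf Rs"
  have ne: "Rs \<noteq> {}" using assms(4) unfolding Rs_def by blast
  have Cnn: "0 \<le> dotp V C \<delta>" if "diversity V \<delta>" for \<delta>
    unfolding dotp_def using C div_nonneg[OF that] by (intro sum_nonneg mult_nonneg_nonneg) auto
  have rnn: "\<forall>r\<in>Rs. 0 \<le> r" unfolding Rs_def using Cnn by auto
  have bdd: "bdd_below Rs" using rnn by (intro bdd_belowI[of _ 0]) auto
  have low: "\<rho> \<le> dotp V C \<delta> / dotp V D \<delta>" if "diversity V \<delta>" "dotp V D \<delta> > 0" for \<delta>
    unfolding \<rho>_def by (rule cInf_lower[OF _ bdd]) (use that in \<open>auto simp: Rs_def\<close>)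
  have rho0: "0 \<le> \<rho>" unfolding \<rho>_def using ne rnn by (intro cInf_greatest) auto
  have fle: "\<forall>f. hsp_feasible V C D f \<longrightarrow> f \<le> \<rho>"
  proof (intro allI impI)
    fix f assume fe: "hsp_feasible V C D f"
    show "f \<le> \<rho>" unfolding \<rho>_def
    proof (rule cInf_greatest[OF ne])
      fix r assume "r \<in> Rs"
      then obtain \<delta> where d: "diversity V \<delta>" "dotp V D \<delta> > 0" "r = dotp V C \<delta> / dotp V D \<delta>"
        unfolding Rs_def by blast
      have "f * dotp V D \<delta> \<le> dotp V C \<delta>" by (rule weak[OF V C fe d(1)])
      thus "f \<le> r" using d(2,3) by (simp add: pos_le_divide_eq)
    qed
  qed
  have feas: "hsp_feasible V C D \<rho>"
  proof (rule ccontr)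
    assume "\<not> hsp_feasible V C D \<rho>"
    from app1[OF V C D rho0 this] obtain \<delta> where
      d: "diversity V \<delta>" "dotp V D \<delta> > 0" "dotp V C \<delta> < \<rho> * dotp V D \<delta>" by blast
    have "dotp V C \<delta> / dotp V D \<delta> < \<rho>" using d(2,3) by (simp add: pos_divide_less_eq)
    thus False using low[OF d(1,2)] by linarith
  qed
  have Max: "MaxHSP V C D = \<rho>"
    unfolding MaxHSP_def by (rule cSup_eq_maximum) (use feas fle in auto)
  obtain \<delta> where d: "diversity V \<delta>" "dotp V D \<delta> > 0" "dotp V C \<delta> \<le> \<rho> * dotp V D \<delta>"
    and sup: "supported_on V {e. e \<subseteq> V \<and> C e > 0} \<delta>"
    using app2[OF V C D rho0 fle] by blast
  have "dotp V C \<delta> / dotp V D \<delta> \<le> \<rho>" using d(2,3) by (simp add: pos_divide_le_eq)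
  hence eq: "dotp V C \<delta> / dotp V D \<delta> = \<rho>" using low[OF d(1,2)] by linarith
  show ?thesis
    using d(1,2) sup Max eq low by (intro exI[of _ \<delta>]) auto
qed

end
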